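(* Let $d\ge 2$, $r\ge1$, $m\ge 1$ be integers and suppose there exist positive integers $n_1,\dots,n_d$ and a nonzero polynomial of degree $m$ in $\mathbb{C}[x_{i_1,\dots,i_d}\mid i_j\in[n_j]]$ vanishing on all tensors in $\mathbb{C}^{n_1}\otimes\cdots\otimes\mathbb{C}^{n_d}$ of partition rank at most $r$. Then there exists a nonzero polynomial $f\in\mathbb{Z}[x_{i_1,\dots,i_d}\mid i_1,\dots,i_d\in[m]]$ whose coefficients have greatest common divisor $1$, which has weight $(1^m,\dots,1^m)$, and which vanishes on all tensors in $\mathbb{C}^m\otimes\cdots\otimes\mathbb{C}^m$ ($d$ factors) of partition rank at most $r$. *)

theory Defs
  imports Complex_Main "HOL-Library.Poly_Mapping"
begin

(* Index tuples (i_1,...,i_d) are lists of length d, 0-based: i!j < n j.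
   A tensor in C^{n_1} (x) ... (x) C^{n_d} is a function nat list => complex
   (only entries at valid index tuples matter). *)
definition valid_idx :: "nat \<Rightarrow> (nat \<Rightarrow> nat) \<Rightarrow> nat list \<Rightarrow> bool" where
  "valid_idx d n i \<longleftrightarrow> length i = d \<and> (\<forall>j<d. i ! j < n j)"

type_synonym 'a mpoly = "(nat list \<Rightarrow>\<^sub>0 nat) \<Rightarrow>\<^sub>0 'a"

definition poly_vars :: "('a::zero) mpoly \<Rightarrow> nat list set" where
  "poly_vars p = (\<Union>\<mu>\<in>Poly_Mapping.keys p. Poly_Mapping.keys (\<mu> :: nat list \<Rightarrow>\<^sub>0 nat))"

definition mon_degree :: "(nat list \<Rightarrow>\<^sub>0 nat) \<Rightarrow> nat" where
  "mon_degree \<mu> = (\<Sum>v\<in>Poly_Mapping.keys \<mu>. Poly_Mapping.lookup \<mu> v)"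

definition mpoly_degree :: "('a::zero) mpoly \<Rightarrow> nat" where
  "mpoly_degree p = (if p = 0 then 0 else Max (mon_degree ` Poly_Mapping.keys p))"

definition mpoly_eval :: "('a::comm_semiring_1) mpoly \<Rightarrow> (nat list \<Rightarrow> 'a) \<Rightarrow> 'a" where
  "mpoly_eval p x = (\<Sum>\<mu>\<in>Poly_Mapping.keys p. Poly_Mapping.lookup p \<mu> * (\<Prod>v\<in>Poly_Mapping.keys \<mu>. x v ^ Poly_Mapping.lookup \<mu> v))"

definition depends_only :: "nat \<Rightarrow> nat set \<Rightarrow> (nat list \<Rightarrow> complex) \<Rightarrow> bool" where
  "depends_only d S f \<longleftrightarrow>
     (\<forall>i i'. length i = d \<longrightarrow> length i' = d \<longrightarrow> (\<forall>j\<in>S. i ! j = i' ! j) \<longrightarrow> f i = f i')"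

definition prank_le :: "nat \<Rightarrow> (nat \<Rightarrow> nat) \<Rightarrow> nat \<Rightarrow> (nat list \<Rightarrow> complex) \<Rightarrow> bool" where
  "prank_le d n r T \<longleftrightarrow>
     (\<exists>S a b. (\<forall>k<r. S k \<noteq> {} \<and> S k \<subset> {..<d} \<and>
                       depends_only d (S k) (a k) \<and> depends_only d ({..<d} - S k) (b k)) \<and>
              (\<forall>i. valid_idx d n i \<longrightarrow> T i = (\<Sum>k<r. a k i * b k i)))"

(* weight (1^m,...,1^m) under the torus product of d copies of the m-torus: in every monomial,
   for each tensor direction k and each index a, the total exponent of the
   variables x_i with i_k = a equals 1 *)
definition has_weight_ones :: "nat \<Rightarrow> nat \<Rightarrow> ('a::zero) mpoly \<Rightarrow> bool" where
  "has_weight_ones d m p \<longleftrightarrow>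
     (\<forall>\<mu>\<in>Poly_Mapping.keys p. \<forall>k<d. \<forall>a<m. (\<Sum>v\<in>{v\<in>Poly_Mapping.keys \<mu>. v ! k = a}. Poly_Mapping.lookup \<mu> v) = 1)"

end

theory Submission
  imports Defs "HOL-Computational_Algebra.Polynomial" "HOL-Library.FuncSet"
begin

definition polyfun :: "(complex \<Rightarrow> complex) \<Rightarrow> bool" where
  "polyfun g \<longleftrightarrow> (\<exists>q. \<forall>z. g z = poly q z)"

lemma polyfun_const[intro]: "polyfun (\<lambda>z. c)"
  unfolding polyfun_def by (rule exI[of _ "[:c:]"]) simp

lemma polyfun_id[intro]: "polyfun (\<lambda>z. z)"
  unfolding polyfun_def by (rule exI[of _ "[:0,1:]"]) simp

lemma polyfun_add[intro]: "polyfun f \<Longrightarrow> polyfun g \<Longrightarrow> polyfun (\<lambda>z. f z + g z)"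
  unfolding polyfun_def by (metis poly_add)

lemma polyfun_mult[intro]: "polyfun f \<Longrightarrow> polyfun g \<Longrightarrow> polyfun (\<lambda>z. f z * g z)"
  unfolding polyfun_def by (metis poly_mult)

lemma polyfun_power[intro]: "polyfun f \<Longrightarrow> polyfun (\<lambda>z. f z ^ k)"
  by (induction k) auto

lemma polyfun_sum[intro]: "(\<And>i. i \<in> A \<Longrightarrow> polyfun (f i)) \<Longrightarrow> polyfun (\<lambda>z. \<Sum>i\<in>A. f i z)"
  by (induction A rule: infinite_finite_induct) auto

lemma polyfun_prod[intro]: "(\<And>i. i \<in> A \<Longrightarrow> polyfun (f i)) \<Longrightarrow> polyfun (\<lambda>z. \<Prod>i\<in>A. f i z)"
  by (induction A rule: infinite_finite_induct) auto

lemma polyfun_if[intro]: "polyfun f \<Longrightarrow> polyfun g \<Longrightarrow> polyfun (\<lambda>z. if b then f z else g z)"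
  by (cases b) auto

lemma polyfun_zero_on_Rats:
  assumes "polyfun f" "\<And>z. z \<in> \<rat> \<Longrightarrow> f z = 0"
  shows "f w = 0"
proof -
  obtain q where q: "\<And>z. f z = poly q z" using assms(1) unfolding polyfun_def by blast
  have "q = 0"
  proof (rule ccontr)
    assume "q \<noteq> 0"
    then have "finite {x. poly q x = 0}" by (rule poly_roots_finite)
    moreover have "\<rat> \<subseteq> {x. poly q x = 0}" using assms(2) q by auto
    ultimately show False using Rats_infinite finite_subset by blast
  qed
  then show ?thesis using q by simp
qed

lemma density:
  fixes F :: "('x \<Rightarrow> complex) \<Rightarrow> complex"
  assumes "finite K"
    and "\<And>p. (\<forall>x\<in>K. p x \<in> \<rat>) \<Longrightarrow> F p = 0"
    and "\<And>p p'. (\<forall>x\<in>K. p x = p' x) \<Longrightarrow> F p = F p'"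
    and "\<And>p x. polyfun (\<lambda>z. F (p(x:=z)))"
  shows "F p = 0"
  using assms
proof (induction K arbitrary: F p rule: finite_induct)
  case empty
  then show ?case by blast
next
  case (insert x0 K)
  have Fz: "F (p(x0:=z)) = 0" if z: "z \<in> \<rat>" for z p
  proof -
    let ?G = "\<lambda>p. F (p(x0:=z))"
    have A1: "?G p = 0" if "\<forall>x\<in>K. p x \<in> \<rat>" for p
    proof -
      have "\<forall>x\<in>insert x0 K. (p(x0:=z)) x \<in> \<rat>" using that z by simp
      then show ?thesis using insert.prems(1) by blast
    qed
    have A2: "?G p = ?G p'" if "\<forall>x\<in>K. p x = p' x" for p p'
    proof -
      have "\<forall>x\<in>insert x0 K. (p(x0:=z)) x = (p'(x0:=z)) x" using that by simp
      then show ?thesis using insert.prems(2) by blast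
    qed
    have A3: "polyfun (\<lambda>w. ?G (p(x := w)))" for p x
    proof (cases "x = x0")
      case True
      then show ?thesis by (simp add: polyfun_const)
    next
      case False
      have "polyfun (\<lambda>w. F ((p(x0:=z))(x := w)))" by (rule insert.prems(3))
      then show ?thesis using False by (simp add: fun_upd_twist)
    qed
    show ?thesis using insert.IH[of ?G, OF A1 A2 A3] .
  qed
  have "F (p(x0 := p x0)) = 0"
  proof (rule polyfun_zero_on_Rats[where f="\<lambda>z. F (p(x0:=z))"])
    show "polyfun (\<lambda>z. F (p(x0 := z)))" by (rule insert.prems(3))
    show "F (p(x0 := z)) = 0" if "z \<in> \<rat>" for z using Fz that .
  qed
  then show ?case by simp
qed



lemma int_normalize:
  fixes q :: "'k \<Rightarrow> rat"
  assumes M: "finite M" and nu0: "\<nu>0 \<in> M" "q \<nu>0 \<noteq> 0"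
  shows "\<exists>k::'k \<Rightarrow> int. \<exists>c::rat. c \<noteq> 0 \<and> (\<forall>\<nu>\<in>M. of_int (k \<nu>) = c * q \<nu>)
           \<and> Gcd (k ` {\<nu>\<in>M. q \<nu> \<noteq> 0}) = 1"
proof -
  define a where "a \<nu> = fst (quotient_of (q \<nu>))" for \<nu>
  define b where "b \<nu> = snd (quotient_of (q \<nu>))" for \<nu>
  have qab: "q \<nu> = of_int (a \<nu>) / of_int (b \<nu>)" for \<nu>
    unfolding a_def b_def by (simp add: quotient_of_div)
  have bpos: "b \<nu> > 0" for \<nu>
    unfolding b_def by (simp add: quotient_of_denom_pos')
  define D where "D = (\<Prod>\<nu>\<in>M. b \<nu>)"
  have Dpos: "D > 0" unfolding D_def using bpos by (simp add: prod_pos)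
  define k1 where "k1 \<nu> = a \<nu> * (D div b \<nu>)" for \<nu>
  have k1: "of_int (k1 \<nu>) = of_int D * q \<nu>" if "\<nu> \<in> M" for \<nu>
  proof -
    have "b \<nu> dvd D" unfolding D_def using that M by (simp add: dvd_prodI)
    then obtain e where e: "D = b \<nu> * e" by blast
    have "D div b \<nu> = e" using e bpos[of \<nu>] by simp
    then show ?thesis unfolding k1_def qab using bpos[of \<nu>] e
      by (simp add: field_simps)
  qed
  define M' where "M' = {\<nu>\<in>M. q \<nu> \<noteq> 0}"
  define G where "G = Gcd (k1 ` M')"
  have nu0': "\<nu>0 \<in> M'" unfolding M'_def using nu0 by simp
  have "k1 \<nu>0 \<noteq> 0"
  proof
    assume "k1 \<nu>0 = 0"
    then have "of_int D * q \<nu>0 = 0" using k1[OF nu0(1)] by simp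
    then show False using Dpos nu0 by simp
  qed
  then have G0: "G \<noteq> 0" unfolding G_def using nu0' by (auto simp: Gcd_0_iff)
  have Gpos: "G > 0" using G0 unfolding G_def
    by (metis Gcd_int_greater_eq_0 less_le)
  define k where "k \<nu> = k1 \<nu> div G" for \<nu>
  have Gdvd: "G dvd k1 \<nu>" if "\<nu> \<in> M'" for \<nu> unfolding G_def using that by (simp add: Gcd_dvd)
  have kk: "k1 \<nu> = G * k \<nu>" if "\<nu> \<in> M'" for \<nu> unfolding k_def using Gdvd[OF that] by simp
  have "k1 ` M' = (\<lambda>\<nu>. G * k \<nu>) ` M'" by (rule image_cong) (simp_all add: kk)
  then have "G = Gcd ((*) G ` (k ` M'))"
    unfolding G_def by (simp add: image_image)
  also have "\<dots> = normalize (G * Gcd (k ` M'))" by (rule Gcd_mult)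
  also have "\<dots> = G * Gcd (k ` M')" using Gpos by (simp add: abs_mult normalize_int_def)
  finally have g1: "Gcd (k ` M') = 1" using G0 by simp
  show ?thesis
  proof (intro exI conjI ballI)
    show "of_rat (of_int D / of_int G) \<noteq> (0::rat)" using Dpos Gpos by simp
    show "Gcd (k ` {\<nu>\<in>M. q \<nu> \<noteq> 0}) = 1" using g1 unfolding M'_def .
    fix \<nu> assume nu: "\<nu> \<in> M"
    show "of_int (k \<nu>) = of_rat (of_int D / of_int G) * q \<nu>"
    proof (cases "q \<nu> = 0")
      case True
      then have "k1 \<nu> = 0" using k1[OF nu] by simp
      then show ?thesis unfolding k_def using True by simp
    next
      case False
      then have "\<nu> \<in> M'" unfolding M'_def using nu by simp
      then have "of_int (k1 \<nu>) = (of_int G :: rat) * of_int (k \<nu>)" using kk by simp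
      then show ?thesis using k1[OF nu] Gpos by (simp add: field_simps)
    qed
  qed
qed



definition monval :: "(nat list \<Rightarrow>\<^sub>0 nat) \<Rightarrow> (nat list \<Rightarrow> 'a::comm_semiring_1) \<Rightarrow> 'a" where
  "monval \<mu> T = (\<Prod>v\<in>Poly_Mapping.keys \<mu>. T v ^ Poly_Mapping.lookup \<mu> v)"

lemma monval_cong: "(\<And>v. v \<in> Poly_Mapping.keys \<mu> \<Longrightarrow> T v = T' v) \<Longrightarrow> monval \<mu> T = monval \<mu> T'"
  unfolding monval_def by (rule prod.cong) auto

lemma monval_Rats: "(\<And>v. v \<in> Poly_Mapping.keys \<mu> \<Longrightarrow> T v \<in> \<rat>) \<Longrightarrow> monval \<mu> T \<in> \<rat>"
  unfolding monval_def by (intro Rats_prod Rats_power) auto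

definition proj :: "nat \<Rightarrow> nat set \<Rightarrow> nat list \<Rightarrow> nat list" where
  "proj d S i = map (\<lambda>j. if j \<in> S then i ! j else 0) [0..<d]"

lemma length_proj[simp]: "length (proj d S i) = d"
  unfolding proj_def by simp

lemma proj_nth: "j < d \<Longrightarrow> proj d S i ! j = (if j \<in> S then i ! j else 0)"
  unfolding proj_def by simp

lemma proj_valid: "m \<ge> 1 \<Longrightarrow> valid_idx d (\<lambda>_. m) i \<Longrightarrow> valid_idx d (\<lambda>_. m) (proj d S i)"
  unfolding valid_idx_def by (simp add: proj_nth)

lemma depends_only_proj:
  assumes "depends_only d S f" "S \<subseteq> {..<d}" "length i = d"
  shows "f (proj d S i) = f i"
proof -
  have "\<forall>j\<in>S. proj d S i ! j = i ! j" using assms(2) by (auto simp: proj_nth)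
  moreover have "length (proj d S i) = d" by simp
  ultimately show ?thesis using assms(1,3) unfolding depends_only_def by blast
qed

lemma proj_cong: "(\<And>j. j \<in> S \<Longrightarrow> j < d \<Longrightarrow> i ! j = i' ! j) \<Longrightarrow> proj d S i = proj d S i'"
  unfolding proj_def by auto

lemma rat_functional:
  fixes c0 :: complex assumes "c0 \<noteq> 0"
  shows "\<exists>L::complex \<Rightarrow> rat. L c0 = 1 \<and> (\<forall>q x. L (of_rat q * x) = q * L x)
            \<and> (\<forall>(g::(nat list \<Rightarrow>\<^sub>0 nat) \<Rightarrow> complex) A. L (sum g A) = (\<Sum>a\<in>A. L (g a)))"
proof -
  interpret V: vector_space_pair "\<lambda>(q::rat) (z::complex). of_rat q * z" "(*) :: rat \<Rightarrow> rat \<Rightarrow> rat"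
    by unfold_locales (auto simp: algebra_simps of_rat_add of_rat_mult)
  have ind: "V.vs1.independent {c0}"
  proof (rule V.vs1.independent_insertI)
    show "c0 \<notin> V.vs1.span {}" using assms by (simp add: V.vs1.span_empty)
    show "V.vs1.independent {}" by (rule V.vs1.independent_empty)
  qed
  interpret L: Vector_Spaces.linear "\<lambda>(q::rat) (z::complex). of_rat q * z" "(*) :: rat \<Rightarrow> rat \<Rightarrow> rat" "V.construct {c0} (\<lambda>_. 1)"
    by (rule V.linear_construct[OF ind])
  have 1: "V.construct {c0} (\<lambda>_. 1) c0 = 1" using V.construct_basis[OF ind] by simp
  have 2: "\<forall>q x. V.construct {c0} (\<lambda>_. 1) (of_rat q * x) = q * V.construct {c0} (\<lambda>_. 1) x"
    using L.scale by simp
  have 3: "\<forall>(g::(nat list \<Rightarrow>\<^sub>0 nat) \<Rightarrow> complex) A. V.construct {c0} (\<lambda>_. 1) (sum g A) = (\<Sum>a\<in>A. V.construct {c0} (\<lambda>_. 1) (g a))"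
    by (intro allI) (rule L.sum)
  show ?thesis using 1 2 3 by blast
qed



lemma finite_valid: "finite {i. valid_idx d (\<lambda>_. m) i}"
proof -
  have "{i. valid_idx d (\<lambda>_. m) i} \<subseteq> {xs. set xs \<subseteq> {..<m} \<and> length xs = d}"
    unfolding valid_idx_def by (auto simp: in_set_conv_nth)
  then show ?thesis using finite_lists_length_eq[of "{..<m}" d] finite_subset by blast
qed

lemma rationalize:
  fixes gc :: "(nat list \<Rightarrow>\<^sub>0 nat) \<Rightarrow> complex"
  assumes M: "finite M" and nu0: "\<nu>0 \<in> M" "gc \<nu>0 \<noteq> 0" and m: "m \<ge> 1"
    and vars: "\<And>\<nu>. \<nu> \<in> M \<Longrightarrow> Poly_Mapping.keys \<nu> \<subseteq> {i. valid_idx d (\<lambda>_. m) i}"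
    and van: "\<And>T. prank_le d (\<lambda>_. m) r T \<Longrightarrow> (\<Sum>\<nu>\<in>M. gc \<nu> * monval \<nu> T) = 0"
  shows "\<exists>q. q \<nu>0 \<noteq> 0 \<and> (\<forall>T. prank_le d (\<lambda>_. m) r T \<longrightarrow> (\<Sum>\<nu>\<in>M. of_rat (q \<nu>) * monval \<nu> T) = 0)"
proof -
  obtain L :: "complex \<Rightarrow> rat" where L1: "L (gc \<nu>0) = 1"
    and Ls: "\<And>q x. L (of_rat q * x) = q * L x"
    and Lsum: "\<And>(g::(nat list \<Rightarrow>\<^sub>0 nat) \<Rightarrow> complex) A. L (sum g A) = (\<Sum>a\<in>A. L (g a))"
    using rat_functional[OF nu0(2)] by blast
  define q where "q \<nu> = L (gc \<nu>)" for \<nu>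
  have ratv: "(\<Sum>\<nu>\<in>M. of_rat (q \<nu>) * monval \<nu> T) = 0"
    if T: "prank_le d (\<lambda>_. m) r T" and TQ: "\<And>i. valid_idx d (\<lambda>_. m) i \<Longrightarrow> T i \<in> \<rat>" for T
  proof -
    have "\<forall>\<nu>\<in>M. \<exists>w. monval \<nu> T = of_rat w"
    proof
      fix \<nu> assume "\<nu> \<in> M"
      then have "monval \<nu> T \<in> \<rat>" using vars TQ by (intro monval_Rats) blast
      then show "\<exists>w. monval \<nu> T = of_rat w" by (auto elim: Rats_cases)
    qed
    then obtain w where w: "\<And>\<nu>. \<nu> \<in> M \<Longrightarrow> monval \<nu> T = of_rat (w \<nu>)" by metis
    have "0 = L (\<Sum>\<nu>\<in>M. gc \<nu> * monval \<nu> T)"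
      using van[OF T] Ls[of 0 0] by simp
    also have "\<dots> = (\<Sum>\<nu>\<in>M. L (gc \<nu> * monval \<nu> T))" by (rule Lsum)
    also have "\<dots> = (\<Sum>\<nu>\<in>M. q \<nu> * w \<nu>)"
    proof (rule sum.cong[OF refl])
      fix \<nu> assume nu: "\<nu> \<in> M"
      have e: "gc \<nu> * monval \<nu> T = of_rat (w \<nu>) * gc \<nu>" by (simp add: w[OF nu] mult.commute)
      show "L (gc \<nu> * monval \<nu> T) = q \<nu> * w \<nu>" unfolding e q_def Ls by (rule mult.commute)
    qed
    finally have 0: "(\<Sum>\<nu>\<in>M. q \<nu> * w \<nu>) = 0" by simp
    have "(\<Sum>\<nu>\<in>M. of_rat (q \<nu>) * monval \<nu> T) = (\<Sum>\<nu>\<in>M. (of_rat (q \<nu> * w \<nu>) :: complex))"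
      by (rule sum.cong) (simp_all add: w of_rat_mult)
    also have "\<dots> = of_rat (\<Sum>\<nu>\<in>M. q \<nu> * w \<nu>)" by (simp add: of_rat_sum)
    finally show ?thesis using 0 by simp
  qed
  have "(\<Sum>\<nu>\<in>M. of_rat (q \<nu>) * monval \<nu> T) = 0" if T: "prank_le d (\<lambda>_. m) r T" for T
  proof -
    obtain S a b where
      Sab: "\<And>k. k < r \<Longrightarrow> S k \<noteq> {} \<and> S k \<subset> {..<d} \<and>
                       depends_only d (S k) (a k) \<and> depends_only d ({..<d} - S k) (b k)"
      and Tsum: "\<And>i. valid_idx d (\<lambda>_. m) i \<Longrightarrow> T i = (\<Sum>k<r. a k i * b k i)"
      using T unfolding prank_le_def by blast
    define Tp where "Tp p i = (\<Sum>k<r. p (True, k, proj d (S k) i) * p (False, k, proj d ({..<d} - S k) i))"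
      for p :: "bool \<times> nat \<times> nat list \<Rightarrow> complex" and i
    define K where "K = (UNIV :: bool set) \<times> {..<r} \<times> {i. valid_idx d (\<lambda>_. m) i}"
    define F where "F p = (\<Sum>\<nu>\<in>M. of_rat (q \<nu>) * monval \<nu> (Tp p))" for p
    have finK: "finite K" unfolding K_def using finite_valid by simp
    have projK: "(\<beta>, k, proj d U i) \<in> K" if "valid_idx d (\<lambda>_. m) i" "k < r" for \<beta> k U i
      unfolding K_def using proj_valid[OF m that(1)] that(2) by simp
    have TpK: "Tp p i = Tp p' i" if "\<forall>x\<in>K. p x = p' x" "valid_idx d (\<lambda>_. m) i" for p p' i
      unfolding Tp_def using that projK by (intro sum.cong refl) simp
    have F1: "F p = 0" if "\<forall>x\<in>K. p x \<in> \<rat>" for p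
      unfolding F_def
    proof (rule ratv)
      show "Tp p i \<in> \<rat>" if "valid_idx d (\<lambda>_. m) i" for i
        unfolding Tp_def using projK[OF that] \<open>\<forall>x\<in>K. p x \<in> \<rat>\<close>
        by (intro Rats_sum Rats_mult) auto
      show "prank_le d (\<lambda>_. m) r (Tp p)"
        unfolding prank_le_def
      proof (intro exI conjI allI impI)
        fix k assume k: "k < r"
        show "S k \<noteq> {}" "S k \<subset> {..<d}" using Sab[OF k] by auto
        show "depends_only d (S k) (\<lambda>i. p (True, k, proj d (S k) i))"
          unfolding depends_only_def by (auto intro!: arg_cong[where f="\<lambda>w. p (True, k, w)"] proj_cong)
        show "depends_only d ({..<d} - S k) (\<lambda>i. p (False, k, proj d ({..<d} - S k) i))"
          unfolding depends_only_def by (auto intro!: arg_cong[where f="\<lambda>w. p (False, k, w)"] proj_cong)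
      next
        fix i assume "valid_idx d (\<lambda>_. m) i"
        show "Tp p i = (\<Sum>k<r. p (True, k, proj d (S k) i) * p (False, k, proj d ({..<d} - S k) i))"
          unfolding Tp_def ..
      qed
    qed
    have F2: "F p = F p'" if "\<forall>x\<in>K. p x = p' x" for p p'
      unfolding F_def
      by (intro sum.cong refl arg_cong2[where f="(*)"] monval_cong TpK[OF that]) (use vars in blast)
    have F3: "polyfun (\<lambda>z. F (p(x:=z)))" for p x
      unfolding F_def monval_def Tp_def fun_upd_apply
      by (intro polyfun_sum polyfun_mult polyfun_power polyfun_prod polyfun_if polyfun_const polyfun_id)
    define pT where "pT = (\<lambda>(\<beta>::bool, k::nat, w::nat list). if \<beta> then a k w else b k w)"
    have "F pT = 0" using density[OF finK F1 F2 F3] .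
    moreover have "Tp pT i = T i" if "valid_idx d (\<lambda>_. m) i" for i
    proof -
      have len: "length i = d" using that unfolding valid_idx_def by simp
      have "Tp pT i = (\<Sum>k<r. a k i * b k i)"
        unfolding Tp_def pT_def
      proof (intro sum.cong refl)
        fix k assume "k \<in> {..<r}"
        then have k: "S k \<subset> {..<d}" "depends_only d (S k) (a k)" "depends_only d ({..<d} - S k) (b k)"
          using Sab by auto
        have "a k (proj d (S k) i) = a k i" by (rule depends_only_proj[OF k(2) _ len]) (use k(1) in blast)
        moreover have "b k (proj d ({..<d} - S k) i) = b k i" by (rule depends_only_proj[OF k(3) _ len]) blast
        ultimately show "(case (True, k, proj d (S k) i) of (\<beta>, k, w) \<Rightarrow> if \<beta> then a k w else b k w) *
              (case (False, k, proj d ({..<d} - S k) i) of (\<beta>, k, w) \<Rightarrow> if \<beta> then a k w else b k w) =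
              a k i * b k i" by simp
      qed
      then show ?thesis using Tsum[OF that] by simp
    qed
    then have "F pT = (\<Sum>\<nu>\<in>M. of_rat (q \<nu>) * monval \<nu> T)"
      unfolding F_def
      by (intro sum.cong refl arg_cong2[where f="(*)"] monval_cong) (use vars in blast)
    ultimately show ?thesis by simp
  qed
  moreover have "q \<nu>0 \<noteq> 0" using L1 q_def by simp
  ultimately show ?thesis by blast
qed



lemma eval_superset:
  assumes "finite M" "Poly_Mapping.keys p \<subseteq> M"
  shows "mpoly_eval p T = (\<Sum>\<nu>\<in>M. Poly_Mapping.lookup p \<nu> * monval \<nu> T)"
  unfolding mpoly_eval_def monval_def
  by (rule sum.mono_neutral_left[OF assms(1,2)]) (simp add: in_keys_iff)

lemma lookup_map_of_int: "Poly_Mapping.lookup (Poly_Mapping.map of_int f) \<nu> = (of_int (Poly_Mapping.lookup f \<nu>) :: complex)"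
  by (simp add: map.rep_eq when_def)

lemma keys_map_of_int: "Poly_Mapping.keys (Poly_Mapping.map (of_int :: int \<Rightarrow> complex) f) = Poly_Mapping.keys f"
  by (simp add: in_keys_iff lookup_map_of_int set_eq_iff)

lemma finish:
  fixes gc :: "(nat list \<Rightarrow>\<^sub>0 nat) \<Rightarrow> complex"
  assumes M: "finite M" and nu0: "\<nu>0 \<in> M" "gc \<nu>0 \<noteq> 0" and m: "m \<ge> 1"
    and vars: "\<And>\<nu>. \<nu> \<in> M \<Longrightarrow> Poly_Mapping.keys \<nu> \<subseteq> {i. valid_idx d (\<lambda>_. m) i}"
    and wt: "\<And>\<nu> k a. \<nu> \<in> M \<Longrightarrow> k < d \<Longrightarrow> a < m \<Longrightarrow>
              (\<Sum>v\<in>{v\<in>Poly_Mapping.keys \<nu>. v ! k = a}. Poly_Mapping.lookup \<nu> v) = 1"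
    and van: "\<And>T. prank_le d (\<lambda>_. m) r T \<Longrightarrow> (\<Sum>\<nu>\<in>M. gc \<nu> * monval \<nu> T) = 0"
  shows "\<exists>f :: int mpoly. f \<noteq> 0 \<and> poly_vars f \<subseteq> {i. valid_idx d (\<lambda>_. m) i} \<and>
           Gcd (Poly_Mapping.lookup f ` Poly_Mapping.keys f) = 1 \<and> has_weight_ones d m f \<and>
           (\<forall>T. prank_le d (\<lambda>_. m) r T \<longrightarrow> mpoly_eval (Poly_Mapping.map of_int f :: complex mpoly) T = 0)"
proof -
  obtain q where q0: "q \<nu>0 \<noteq> 0"
    and qv: "\<And>T. prank_le d (\<lambda>_. m) r T \<Longrightarrow> (\<Sum>\<nu>\<in>M. of_rat (q \<nu>) * monval \<nu> T) = 0"
    using rationalize[OF M nu0 m vars van] by blast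
  obtain k :: "_ \<Rightarrow> int" and c :: rat where c0: "c \<noteq> 0"
    and kc: "\<And>\<nu>. \<nu> \<in> M \<Longrightarrow> of_int (k \<nu>) = c * q \<nu>"
    and g1: "Gcd (k ` {\<nu>\<in>M. q \<nu> \<noteq> 0}) = 1"
    using int_normalize[of M \<nu>0 q, OF M nu0(1) q0] by blast
  define kk where "kk \<nu> = (if \<nu> \<in> M then k \<nu> else 0)" for \<nu>
  have fin: "finite {\<nu>. kk \<nu> \<noteq> 0}"
    by (rule finite_subset[OF _ M]) (auto simp: kk_def split: if_splits)
  define f :: "int mpoly" where "f = Abs_poly_mapping kk"
  have lf: "Poly_Mapping.lookup f = kk" unfolding f_def using fin by simp
  have k0: "k \<nu> = 0 \<longleftrightarrow> q \<nu> = 0" if "\<nu> \<in> M" for \<nu>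
  proof -
    have "(of_int (k \<nu>) :: rat) = c * q \<nu>" using kc[OF that] .
    then show ?thesis using c0 by (metis mult_eq_0_iff of_int_eq_0_iff)
  qed
  have keysf: "Poly_Mapping.keys f = {\<nu>\<in>M. q \<nu> \<noteq> 0}"
    using k0 by (auto simp: in_keys_iff lf kk_def split: if_splits)
  have kM: "Poly_Mapping.keys f \<subseteq> M" using keysf by auto
  show ?thesis
  proof (intro exI conjI allI impI)
    show "f \<noteq> 0"
    proof
      assume "f = 0"
      then have "Poly_Mapping.lookup f \<nu>0 = 0" by simp
      then show False using k0[OF nu0(1)] q0 nu0(1) by (simp add: lf kk_def)
    qed
    show "poly_vars f \<subseteq> {i. valid_idx d (\<lambda>_. m) i}"
      unfolding poly_vars_def using kM vars by blast
    show "Gcd (Poly_Mapping.lookup f ` Poly_Mapping.keys f) = 1"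
      unfolding keysf lf using g1 by (simp add: kk_def)
    show "has_weight_ones d m f"
      unfolding has_weight_ones_def using kM wt by blast
    fix T assume T: "prank_le d (\<lambda>_. m) r T"
    have "mpoly_eval (Poly_Mapping.map of_int f :: complex mpoly) T
        = (\<Sum>\<nu>\<in>M. of_int (Poly_Mapping.lookup f \<nu>) * monval \<nu> T)"
      by (subst eval_superset[OF M]) (use kM in \<open>simp_all add: keys_map_of_int lookup_map_of_int\<close>)
    also have "\<dots> = (\<Sum>\<nu>\<in>M. of_rat c * (of_rat (q \<nu>) * monval \<nu> T))"
    proof (rule sum.cong[OF refl])
      fix \<nu> assume nu: "\<nu> \<in> M"
      have "(of_int (k \<nu>) :: complex) = of_rat (of_int (k \<nu>))" by simp
      also have "\<dots> = of_rat c * of_rat (q \<nu>)" by (simp add: kc[OF nu] of_rat_mult)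
      finally show "of_int (Poly_Mapping.lookup f \<nu>) * monval \<nu> T = of_rat c * (of_rat (q \<nu>) * monval \<nu> T)"
        using nu by (simp add: lf kk_def)
    qed
    also have "\<dots> = of_rat c * (\<Sum>\<nu>\<in>M. of_rat (q \<nu>) * monval \<nu> T)" by (simp add: sum_distrib_left)
    also have "\<dots> = 0" using qv[OF T] by simp
    finally show "mpoly_eval (Poly_Mapping.map of_int f :: complex mpoly) T = 0" .
  qed
qed



lemma alt_pow_sum:
  assumes "finite S"
  shows "(\<Sum>B\<in>Pow S. (-1::complex) ^ card B) = (if S = {} then 1 else 0)"
proof -
  have "(\<Prod>x\<in>S. (1::complex) - 1) = (\<Sum>X\<in>Pow S. (-1) ^ card X * (\<Prod>x\<in>X. 1) * (\<Prod>x\<in>S-X. 1))"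
    by (rule prod_diff_conv_sum[OF assms])
  then have e: "(\<Sum>X\<in>Pow S. (-1::complex) ^ card X) = 0 ^ card S" by (simp add: prod_constant)
  show ?thesis
  proof (cases "S = {}")
    case False
    then have "card S > 0" using assms by (simp add: card_gt_0_iff)
    then show ?thesis using e False by simp
  qed simp
qed

lemma prod_if01:
  assumes "finite A"
  shows "(\<Prod>j\<in>A. if c j then (1::complex) else 0) = (if \<forall>j\<in>A. c j then 1 else 0)"
  using assms by (induction A rule: finite_induct) auto

lemma IE:
  fixes I :: "nat \<Rightarrow> nat set"
  assumes I: "\<And>j. j < d \<Longrightarrow> I j \<subseteq> {..<m}"
  shows "(\<Sum>A\<in>PiE {..<d} (\<lambda>_. Pow {..<m}). (-1::complex) ^ (\<Sum>j<d. card (A j)) *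
            (if \<forall>j<d. A j \<inter> I j = {} then 1 else 0)) = (if \<forall>j<d. I j = {..<m} then 1 else 0)"
proof -
  define w where "w j B = (-1::complex) ^ card B * (if B \<inter> I j = {} then 1 else 0)" for j B
  have 1: "(-1::complex) ^ (\<Sum>j<d. card (A j)) * (if \<forall>j<d. A j \<inter> I j = {} then 1 else 0)
      = (\<Prod>j<d. w j (A j))" for A
  proof -
    have "(if \<forall>j<d. A j \<inter> I j = {} then 1 else 0) = (\<Prod>j<d. if A j \<inter> I j = {} then (1::complex) else 0)"
      using prod_if01[of "{..<d}" "\<lambda>j. A j \<inter> I j = {}"] by simp
    then show ?thesis unfolding w_def by (simp add: power_sum prod.distrib)
  qed
  have 2: "(\<Sum>B\<in>Pow {..<m}. w j B) = (if I j = {..<m} then 1 else 0)" if j: "j < d" for j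
  proof -
    have "(\<Sum>B\<in>Pow {..<m}. w j B) = (\<Sum>B\<in>Pow {..<m}. if B \<inter> I j = {} then (-1::complex) ^ card B else 0)"
      unfolding w_def by (rule sum.cong) auto
    also have "\<dots> = (\<Sum>B\<in>{B\<in>Pow {..<m}. B \<inter> I j = {}}. (-1::complex) ^ card B)"
      by (rule sum.inter_filter[symmetric]) simp
    also have "{B\<in>Pow {..<m}. B \<inter> I j = {}} = Pow ({..<m} - I j)" by auto
    also have "(\<Sum>B\<in>Pow ({..<m} - I j). (-1::complex) ^ card B) = (if {..<m} - I j = {} then 1 else 0)"
      by (rule alt_pow_sum) simp
    also have "({..<m} - I j = {}) = (I j = {..<m})" using I[OF j] by auto
    finally show ?thesis .
  qed
  have "(\<Sum>A\<in>PiE {..<d} (\<lambda>_. Pow {..<m}). (-1::complex) ^ (\<Sum>j<d. card (A j)) *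
            (if \<forall>j<d. A j \<inter> I j = {} then 1 else 0)) = (\<Sum>A\<in>PiE {..<d} (\<lambda>_. Pow {..<m}). \<Prod>j<d. w j (A j))"
    using 1 by simp
  also have "\<dots> = (\<Prod>j<d. \<Sum>B\<in>Pow {..<m}. w j B)"
    by (rule prod_sum_PiE[symmetric]) auto
  also have "\<dots> = (\<Prod>j<d. if I j = {..<m} then 1 else 0)"
    using 2 by simp
  also have "\<dots> = (if \<forall>j<d. I j = {..<m} then 1 else 0)"
    using prod_if01[of "{..<d}" "\<lambda>j. I j = {..<m}"] by simp
  finally show ?thesis .
qed



definition Pr :: "nat \<Rightarrow> (nat \<Rightarrow> nat set) \<Rightarrow> nat list set" where
  "Pr d R = {u. length u = d \<and> (\<forall>j<d. u ! j \<in> R j)}"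

definition Qs :: "nat \<Rightarrow> nat set \<Rightarrow> (nat \<Rightarrow> nat set) \<Rightarrow> nat list set" where
  "Qs d S R = {u. length u = d \<and> (\<forall>j<d. (j \<in> S \<longrightarrow> u ! j \<in> R j) \<and> (j \<notin> S \<longrightarrow> u ! j = 0))}"

lemma finite_lists_bounded:
  assumes "finite N"
  shows "finite {u::nat list. length u = d \<and> (\<forall>j<d. u ! j \<in> N)}"
proof -
  have "{u::nat list. length u = d \<and> (\<forall>j<d. u ! j \<in> N)} \<subseteq> {xs. set xs \<subseteq> N \<and> length xs = d}"
    by (auto simp: in_set_conv_nth)
  then show ?thesis using finite_lists_length_eq[OF assms, of d] finite_subset by blast
qed

lemma finite_Pr: "(\<And>j. j < d \<Longrightarrow> R j \<subseteq> N) \<Longrightarrow> finite N \<Longrightarrow> finite (Pr d R)"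
  unfolding Pr_def by (rule finite_subset[OF _ finite_lists_bounded[of N d]]) auto

lemma finite_Qs: "(\<And>j. j < d \<Longrightarrow> R j \<subseteq> N) \<Longrightarrow> finite N \<Longrightarrow> finite (Qs d S R)"
  unfolding Qs_def by (rule finite_subset[OF _ finite_lists_bounded[of "insert 0 N" d]]) auto

definition merge :: "nat \<Rightarrow> nat set \<Rightarrow> nat list \<times> nat list \<Rightarrow> nat list" where
  "merge d S p = map (\<lambda>j. if j \<in> S then fst p ! j else snd p ! j) [0..<d]"

lemma merge_nth: "j < d \<Longrightarrow> merge d S p ! j = (if j \<in> S then fst p ! j else snd p ! j)"
  unfolding merge_def by simp

lemma length_merge[simp]: "length (merge d S p) = d"
  unfolding merge_def by simp

lemma factor_sum:
  fixes \<alpha> \<beta> :: "nat list \<Rightarrow> complex"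
  assumes S: "S \<subseteq> {..<d}" and fin: "\<And>j. j < d \<Longrightarrow> R j \<subseteq> N" "finite N"
    and da: "depends_only d S \<alpha>" and db: "depends_only d ({..<d} - S) \<beta>"
  shows "(\<Sum>u\<in>Pr d R. \<alpha> u * \<beta> u) = (\<Sum>u\<in>Qs d S R. \<alpha> u) * (\<Sum>u\<in>Qs d ({..<d} - S) R. \<beta> u)"
proof -
  let ?Q1 = "Qs d S R" and ?Q2 = "Qs d ({..<d} - S) R"
  have bij: "bij_betw (merge d S) (?Q1 \<times> ?Q2) (Pr d R)"
  proof (rule bij_betw_imageI)
    show "inj_on (merge d S) (?Q1 \<times> ?Q2)"
    proof (rule inj_onI)
      fix p p'
      assume A: "p \<in> ?Q1 \<times> ?Q2" "p' \<in> ?Q1 \<times> ?Q2"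
        and e: "merge d S p = merge d S p'"
      have e': "(if j \<in> S then fst p ! j else snd p ! j) = (if j \<in> S then fst p' ! j else snd p' ! j)" if "j < d" for j
      proof -
        have "merge d S p ! j = merge d S p' ! j" using e by simp
        then show ?thesis using that by (simp only: merge_nth)
      qed
      show "p = p'"
      proof (rule prod_eqI)
        show "fst p = fst p'"
        proof (rule nth_equalityI)
          show "length (fst p) = length (fst p')" using A unfolding Qs_def by auto
          fix j assume "j < length (fst p)"
          then have j: "j < d" using A unfolding Qs_def by auto
          show "fst p ! j = fst p' ! j" using e'[OF j] A j unfolding Qs_def by (cases "j \<in> S") auto
        qed
        show "snd p = snd p'"
        proof (rule nth_equalityI)
          show "length (snd p) = length (snd p')" using A unfolding Qs_def by auto
          fix j assume "j < length (snd p)"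
          then have j: "j < d" using A unfolding Qs_def by auto
          show "snd p ! j = snd p' ! j" using e'[OF j] A j unfolding Qs_def by (cases "j \<in> S") auto
        qed
      qed
    qed
    show "merge d S ` (?Q1 \<times> ?Q2) = Pr d R"
    proof
      show "merge d S ` (?Q1 \<times> ?Q2) \<subseteq> Pr d R"
        unfolding merge_def Qs_def Pr_def by auto
      show "Pr d R \<subseteq> merge d S ` (?Q1 \<times> ?Q2)"
      proof
        fix u assume u: "u \<in> Pr d R"
        have "proj d S u \<in> ?Q1" "proj d ({..<d} - S) u \<in> ?Q2"
          using u unfolding Qs_def Pr_def by (auto simp: proj_nth)
        moreover have "u = merge d S (proj d S u, proj d ({..<d} - S) u)"
          using u unfolding Pr_def merge_def by (intro nth_equalityI) (auto simp: proj_nth)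
        ultimately show "u \<in> merge d S ` (?Q1 \<times> ?Q2)" by blast
      qed
    qed
  qed
  have fa: "\<alpha> (merge d S p) = \<alpha> (fst p)" if "p \<in> ?Q1 \<times> ?Q2" for p
  proof -
    have "length (merge d S p) = d" "length (fst p) = d" using that unfolding merge_def Qs_def by auto
    moreover have "\<forall>j\<in>S. merge d S p ! j = fst p ! j" using S unfolding merge_def by auto
    ultimately show ?thesis using da unfolding depends_only_def by blast
  qed
  have fb: "\<beta> (merge d S p) = \<beta> (snd p)" if "p \<in> ?Q1 \<times> ?Q2" for p
  proof -
    have "length (merge d S p) = d" "length (snd p) = d" using that unfolding merge_def Qs_def by auto
    moreover have "\<forall>j\<in>{..<d} - S. merge d S p ! j = snd p ! j" unfolding merge_def by auto
    ultimately show ?thesis using db unfolding depends_only_def by blast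
  qed
  have "(\<Sum>u\<in>Pr d R. \<alpha> u * \<beta> u) = (\<Sum>p\<in>?Q1 \<times> ?Q2. \<alpha> (merge d S p) * \<beta> (merge d S p))"
    by (rule sum.reindex_bij_betw[OF bij, symmetric])
  also have "\<dots> = (\<Sum>p\<in>?Q1 \<times> ?Q2. \<alpha> (fst p) * \<beta> (snd p))"
    by (rule sum.cong) (simp_all add: fa fb)
  also have "\<dots> = (\<Sum>u\<in>?Q1. \<alpha> u) * (\<Sum>u\<in>?Q2. \<beta> u)"
    by (simp add: sum_product sum.cartesian_product case_prod_beta)
  finally show ?thesis .
qed



definition PL :: "nat \<Rightarrow> nat \<Rightarrow> (nat \<Rightarrow> nat \<Rightarrow> nat) \<Rightarrow> nat list \<Rightarrow> nat list set" where
  "PL d m \<phi> v = {u. length u = d \<and> (\<forall>j<d. u ! j < m \<and> \<phi> j (u ! j) = v ! j)}"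

definition avoid :: "nat \<Rightarrow> (nat \<Rightarrow> nat set) \<Rightarrow> nat list \<Rightarrow> bool" where
  "avoid d A u \<longleftrightarrow> (\<forall>j<d. u ! j \<notin> A j)"

definition TA :: "nat \<Rightarrow> nat \<Rightarrow> (nat \<Rightarrow> nat \<Rightarrow> nat) \<Rightarrow> (nat \<Rightarrow> nat set) \<Rightarrow> (nat list \<Rightarrow> complex) \<Rightarrow> nat list \<Rightarrow> complex" where
  "TA d m \<phi> A T v = (\<Sum>u\<in>PL d m \<phi> v. if avoid d A u then T u else 0)"

definition Eset :: "(nat list \<Rightarrow>\<^sub>0 nat) \<Rightarrow> (nat list \<times> nat) set" where
  "Eset \<mu> = Sigma (Poly_Mapping.keys \<mu>) (\<lambda>v. {..<Poly_Mapping.lookup \<mu> v})"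

definition Hset :: "nat \<Rightarrow> nat \<Rightarrow> (nat \<Rightarrow> nat \<Rightarrow> nat) \<Rightarrow> (nat list \<Rightarrow>\<^sub>0 nat) \<Rightarrow> (nat list \<times> nat \<Rightarrow> nat list) set" where
  "Hset d m \<phi> \<mu> = {h \<in> PiE (Eset \<mu>) (\<lambda>e. PL d m \<phi> (fst e)). \<forall>j<d. (\<lambda>e. h e ! j) ` Eset \<mu> = {..<m}}"

lemma finite_PL: "finite (PL d m \<phi> v)"
  unfolding PL_def by (rule finite_subset[OF _ finite_lists_bounded[of "{..<m}" d]]) auto

lemma finite_Eset: "finite (Eset \<mu>)"
  unfolding Eset_def by simp

lemma finite_Hset: "finite (Hset d m \<phi> \<mu>)"
proof (rule finite_subset)
  show "finite (PiE (Eset \<mu>) (\<lambda>e. PL d m \<phi> (fst e)))" by (rule finite_PiE[OF finite_Eset]) (rule finite_PL)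
qed (auto simp: Hset_def)

lemma monval_Eset: "monval \<mu> x = (\<Prod>e\<in>Eset \<mu>. x (fst e))"
proof -
  have "(\<Prod>e\<in>Eset \<mu>. x (fst e)) = (\<Prod>v\<in>Poly_Mapping.keys \<mu>. \<Prod>i\<in>{..<Poly_Mapping.lookup \<mu> v}. x v)"
    unfolding Eset_def by (subst prod.Sigma) (auto simp: case_prod_beta)
  also have "\<dots> = monval \<mu> x" unfolding monval_def by simp
  finally show ?thesis by simp
qed

lemma prod_if_all:
  assumes "finite E"
  shows "(\<Prod>e\<in>E. if c e then f e else (0::complex)) = (if \<forall>e\<in>E. c e then \<Prod>e\<in>E. f e else 0)"
  using assms by (induction E rule: finite_induct) auto

lemma if_mult_helper: "(c::complex) * (if b then x else 0) = x * (c * (if b then 1 else 0))"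
  by (cases b) simp_all

lemma if_mult_helper2: "x * (if b then 1 else 0) = (if b then x else (0::complex))"
  by (cases b) simp_all

lemma expansion:
  "(\<Sum>A\<in>PiE {..<d} (\<lambda>_. Pow {..<m}). (-1::complex) ^ (\<Sum>j<d. card (A j)) * monval \<mu> (TA d m \<phi> A T))
     = (\<Sum>h\<in>Hset d m \<phi> \<mu>. \<Prod>e\<in>Eset \<mu>. T (h e))"
proof -
  let ?E = "Eset \<mu>"
  let ?PS = "PiE ?E (\<lambda>e. PL d m \<phi> (fst e))"
  let ?AS = "PiE {..<d} (\<lambda>_. Pow {..<m})"
  let ?sg = "\<lambda>A. (-1::complex) ^ (\<Sum>j<d. card (A j))"
  let ?X = "\<lambda>h. \<Prod>e\<in>?E. T (h e)"
  let ?I = "\<lambda>h j. (\<lambda>e. h e ! j) ` ?E"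
  have 1: "monval \<mu> (TA d m \<phi> A T) = (\<Sum>h\<in>?PS. if \<forall>j<d. A j \<inter> ?I h j = {} then ?X h else 0)" for A
  proof -
    have "monval \<mu> (TA d m \<phi> A T) = (\<Prod>e\<in>?E. \<Sum>u\<in>PL d m \<phi> (fst e). if avoid d A u then T u else 0)"
      unfolding monval_Eset TA_def ..
    also have "\<dots> = (\<Sum>h\<in>?PS. \<Prod>e\<in>?E. if avoid d A (h e) then T (h e) else 0)"
      by (rule prod_sum_PiE) (simp_all add: finite_Eset finite_PL)
    also have "\<dots> = (\<Sum>h\<in>?PS. if \<forall>j<d. A j \<inter> ?I h j = {} then ?X h else 0)"
    proof (rule sum.cong[OF refl])
      fix h
      have "(\<forall>e\<in>?E. avoid d A (h e)) = (\<forall>j<d. A j \<inter> ?I h j = {})"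
        unfolding avoid_def by blast
      then show "(\<Prod>e\<in>?E. if avoid d A (h e) then T (h e) else 0) = (if \<forall>j<d. A j \<inter> ?I h j = {} then ?X h else 0)"
        by (simp add: prod_if_all[OF finite_Eset])
    qed
    finally show ?thesis .
  qed
  have "(\<Sum>A\<in>?AS. ?sg A * monval \<mu> (TA d m \<phi> A T))
      = (\<Sum>A\<in>?AS. \<Sum>h\<in>?PS. ?X h * (?sg A * (if \<forall>j<d. A j \<inter> ?I h j = {} then 1 else 0)))"
    unfolding 1 sum_distrib_left by (intro sum.cong refl) (rule if_mult_helper)
  also have "\<dots> = (\<Sum>h\<in>?PS. ?X h * (\<Sum>A\<in>?AS. ?sg A * (if \<forall>j<d. A j \<inter> ?I h j = {} then 1 else 0)))"
    by (subst sum.swap) (simp add: sum_distrib_left)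
  also have "\<dots> = (\<Sum>h\<in>?PS. ?X h * (if \<forall>j<d. ?I h j = {..<m} then 1 else 0))"
  proof (rule sum.cong[OF refl])
    fix h assume h: "h \<in> ?PS"
    have "?I h j \<subseteq> {..<m}" if "j < d" for j
      using h that unfolding PL_def by (auto simp: PiE_iff)
    then show "?X h * (\<Sum>A\<in>?AS. ?sg A * (if \<forall>j<d. A j \<inter> ?I h j = {} then 1 else 0)) =
               ?X h * (if \<forall>j<d. ?I h j = {..<m} then 1 else 0)"
      by (subst IE) auto
  qed
  also have "\<dots> = (\<Sum>h\<in>?PS. if \<forall>j<d. ?I h j = {..<m} then ?X h else 0)"
    by (intro sum.cong refl) (rule if_mult_helper2)
  also have "\<dots> = (\<Sum>h\<in>{h\<in>?PS. \<forall>j<d. ?I h j = {..<m}}. ?X h)"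
    by (rule sum.inter_filter[symmetric]) (simp add: finite_Eset finite_PL finite_PiE)
  also have "{h\<in>?PS. \<forall>j<d. ?I h j = {..<m}} = Hset d m \<phi> \<mu>" unfolding Hset_def ..
  finally show ?thesis .
qed



lemma TA_prank:
  assumes T: "prank_le d (\<lambda>_. m) r T"
  shows "prank_le d n r (TA d m \<phi> A T)"
proof -
  obtain S a b where
    Sab: "\<And>k. k < r \<Longrightarrow> S k \<noteq> {} \<and> S k \<subset> {..<d} \<and>
                     depends_only d (S k) (a k) \<and> depends_only d ({..<d} - S k) (b k)"
    and Tsum: "\<And>i. valid_idx d (\<lambda>_. m) i \<Longrightarrow> T i = (\<Sum>k<r. a k i * b k i)"
    using T unfolding prank_le_def by blast
  define R where "R v j = {c. c < m \<and> c \<notin> A j \<and> \<phi> j c = v ! j}" for v :: "nat list" and j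
  define a' where "a' k v = (\<Sum>u\<in>Qs d (S k) (R v). a k u)" for k v
  define b' where "b' k v = (\<Sum>u\<in>Qs d ({..<d} - S k) (R v). b k u)" for k v
  have RN: "R v j \<subseteq> {..<m}" for v j unfolding R_def by auto
  show ?thesis
    unfolding prank_le_def
  proof (intro exI conjI allI impI)
    fix k assume k: "k < r"
    show "S k \<noteq> {}" "S k \<subset> {..<d}" using Sab[OF k] by auto
    show "depends_only d (S k) (a' k)"
      unfolding depends_only_def
    proof (intro allI impI)
      fix v v' :: "nat list" assume "length v = d" "length v' = d" and e: "\<forall>j\<in>S k. v ! j = v' ! j"
      have "Qs d (S k) (R v) = Qs d (S k) (R v')"
        unfolding Qs_def R_def using e by auto
      then show "a' k v = a' k v'" unfolding a'_def by simp
    qed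
    show "depends_only d ({..<d} - S k) (b' k)"
      unfolding depends_only_def
    proof (intro allI impI)
      fix v v' :: "nat list" assume "length v = d" "length v' = d" and e: "\<forall>j\<in>{..<d} - S k. v ! j = v' ! j"
      have "Qs d ({..<d} - S k) (R v) = Qs d ({..<d} - S k) (R v')"
        unfolding Qs_def R_def using e by auto
      then show "b' k v = b' k v'" unfolding b'_def by simp
    qed
  next
    fix v assume v: "valid_idx d n v"
    have "TA d m \<phi> A T v = (\<Sum>u\<in>{u\<in>PL d m \<phi> v. avoid d A u}. T u)"
      unfolding TA_def by (rule sum.inter_filter[symmetric]) (rule finite_PL)
    also have "{u\<in>PL d m \<phi> v. avoid d A u} = Pr d (R v)"
      unfolding PL_def Pr_def avoid_def R_def by auto
    also have "(\<Sum>u\<in>Pr d (R v). T u) = (\<Sum>u\<in>Pr d (R v). \<Sum>k<r. a k u * b k u)"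
    proof (rule sum.cong[OF refl])
      fix u assume "u \<in> Pr d (R v)"
      then have "valid_idx d (\<lambda>_. m) u" unfolding Pr_def R_def valid_idx_def by auto
      then show "T u = (\<Sum>k<r. a k u * b k u)" by (rule Tsum)
    qed
    also have "\<dots> = (\<Sum>k<r. \<Sum>u\<in>Pr d (R v). a k u * b k u)" by (rule sum.swap)
    also have "\<dots> = (\<Sum>k<r. a' k v * b' k v)"
    proof (rule sum.cong[OF refl])
      fix k assume "k \<in> {..<r}"
      then have k: "S k \<subseteq> {..<d}" "depends_only d (S k) (a k)" "depends_only d ({..<d} - S k) (b k)"
        using Sab by auto
      show "(\<Sum>u\<in>Pr d (R v). a k u * b k u) = a' k v * b' k v"
        unfolding a'_def b'_def by (rule factor_sum[where N="{..<m}", OF k(1) _ _ k(2) k(3)]) (use RN in auto)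
    qed
    finally show "TA d m \<phi> A T v = (\<Sum>k<r. a' k v * b' k v)" .
  qed
qed



lemma lookup_card: "Poly_Mapping.lookup \<mu> v = card {e\<in>Eset \<mu>. fst e = v}"
proof (cases "v \<in> Poly_Mapping.keys \<mu>")
  case True
  then have "{e\<in>Eset \<mu>. fst e = v} = Pair v ` {..<Poly_Mapping.lookup \<mu> v}"
    unfolding Eset_def by auto
  moreover have "card (Pair v ` {..<Poly_Mapping.lookup \<mu> v}) = Poly_Mapping.lookup \<mu> v"
    by (subst card_image) (auto intro: inj_onI)
  ultimately show ?thesis by simp
next
  case False
  have e: "{e\<in>Eset \<mu>. fst e = v} = {}" using False unfolding Eset_def by auto
  show ?thesis unfolding e using False by (simp add: in_keys_iff)
qed

lemma card_Eset: "card (Eset \<mu>) = mon_degree \<mu>"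
  unfolding Eset_def mon_degree_def by simp

definition mon :: "(nat list \<times> nat) set \<Rightarrow> (nat list \<times> nat \<Rightarrow> nat list) \<Rightarrow> (nat list \<Rightarrow>\<^sub>0 nat)" where
  "mon E h = Abs_poly_mapping (\<lambda>u. if u \<in> h ` E then 1 else 0)"

lemma lookup_mon: "finite E \<Longrightarrow> Poly_Mapping.lookup (mon E h) = (\<lambda>u. if u \<in> h ` E then 1 else 0)"
proof -
  assume E: "finite E"
  have "{u. (if u \<in> h ` E then 1 else 0) \<noteq> (0::nat)} = h ` E" by simp
  then have "finite {u. (if u \<in> h ` E then 1 else 0) \<noteq> (0::nat)}" using E by simp
  then show ?thesis unfolding mon_def by (rule lookup_Abs_poly_mapping)
qed

lemma keys_mon: "finite E \<Longrightarrow> Poly_Mapping.keys (mon E h) = h ` E"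
  by (rule set_eqI) (simp add: in_keys_iff lookup_mon)

lemma monval_mon:
  assumes "finite E" "inj_on h E"
  shows "monval (mon E h) T = (\<Prod>e\<in>E. T (h e))"
proof -
  have "monval (mon E h) T = (\<Prod>u\<in>h ` E. T u)"
    unfolding monval_def keys_mon[OF assms(1)] by (rule prod.cong) (auto simp: lookup_mon[OF assms(1)])
  also have "\<dots> = (\<Prod>e\<in>E. T (h e))" by (rule prod.reindex[OF assms(2), unfolded comp_def])
  finally show ?thesis .
qed

lemma Hset_inj:
  assumes "card (Eset \<mu>) \<le> m" "h \<in> Hset d m \<phi> \<mu>" "j < d"
  shows "inj_on (\<lambda>e. h e ! j) (Eset \<mu>)"
proof -
  have im: "(\<lambda>e. h e ! j) ` Eset \<mu> = {..<m}" using assms(2,3) unfolding Hset_def by auto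
  have "m \<le> card (Eset \<mu>)" using card_image_le[OF finite_Eset, of "\<lambda>e. h e ! j" \<mu>] im by simp
  then have "card ((\<lambda>e. h e ! j) ` Eset \<mu>) = card (Eset \<mu>)" using im assms(1) by simp
  then show ?thesis by (rule eq_card_imp_inj_on[OF finite_Eset])
qed

lemma Hset_inj':
  assumes "card (Eset \<mu>) \<le> m" "h \<in> Hset d m \<phi> \<mu>" "d \<ge> 1"
  shows "inj_on h (Eset \<mu>)"
  using Hset_inj[OF assms(1,2), of 0] assms(3) unfolding inj_on_def by auto

lemma Hset_weight:
  assumes "card (Eset \<mu>) \<le> m" "h \<in> Hset d m \<phi> \<mu>" "k < d" "a < m"
  shows "(\<Sum>v\<in>{v\<in>Poly_Mapping.keys (mon (Eset \<mu>) h). v ! k = a}. Poly_Mapping.lookup (mon (Eset \<mu>) h) v) = 1"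
proof -
  have ij: "inj_on (\<lambda>e. h e ! k) (Eset \<mu>)" by (rule Hset_inj[OF assms(1,2,3)])
  have ih: "inj_on h (Eset \<mu>)" using ij unfolding inj_on_def by auto
  have "a \<in> (\<lambda>e. h e ! k) ` Eset \<mu>" using assms(2,3,4) unfolding Hset_def by auto
  then obtain e0 where e0: "e0 \<in> Eset \<mu>" "h e0 ! k = a" by auto
  have "{v\<in>Poly_Mapping.keys (mon (Eset \<mu>) h). v ! k = a} = {h e0}"
  proof
    show "{v \<in> Poly_Mapping.keys (mon (Eset \<mu>) h). v ! k = a} \<subseteq> {h e0}"
    proof
      fix v assume "v \<in> {v \<in> Poly_Mapping.keys (mon (Eset \<mu>) h). v ! k = a}"
      then obtain e where e: "e \<in> Eset \<mu>" "v = h e" "h e ! k = a" by (auto simp: keys_mon[OF finite_Eset])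
      then have "e = e0" using ij e0 unfolding inj_on_def by auto
      then show "v \<in> {h e0}" using e by simp
    qed
    show "{h e0} \<subseteq> {v \<in> Poly_Mapping.keys (mon (Eset \<mu>) h). v ! k = a}"
      using e0 by (auto simp: keys_mon[OF finite_Eset])
  qed
  then show ?thesis using e0 by (simp add: lookup_mon[OF finite_Eset])
qed



lemma reduction:
  fixes P :: "complex mpoly"
  assumes d: "d \<ge> 1" and m: "m \<ge> 1" and P0: "P \<noteq> 0"
    and Pv: "poly_vars P \<subseteq> {i. valid_idx d n i}"
    and Pdeg: "mpoly_degree P = m" and Pvan: "\<forall>T. prank_le d n r T \<longrightarrow> mpoly_eval P T = 0"
  shows "\<exists>M gc \<nu>0. finite M \<and> \<nu>0 \<in> M \<and> gc \<nu>0 \<noteq> (0::complex) \<and>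
     (\<forall>\<nu>\<in>M. Poly_Mapping.keys \<nu> \<subseteq> {i. valid_idx d (\<lambda>_. m) i}) \<and>
     (\<forall>\<nu>\<in>M. \<forall>k<d. \<forall>a<m. (\<Sum>v\<in>{v\<in>Poly_Mapping.keys \<nu>. v ! k = a}. Poly_Mapping.lookup \<nu> v) = 1) \<and>
     (\<forall>T. prank_le d (\<lambda>_. m) r T \<longrightarrow> (\<Sum>\<nu>\<in>M. gc \<nu> * monval \<nu> T) = 0)"
proof -
  let ?K = "Poly_Mapping.keys P"
  have finK: "finite ?K" by simp
  have Kne: "?K \<noteq> {}" using P0 by simp
  have degle: "card (Eset \<mu>) \<le> m" if "\<mu> \<in> ?K" for \<mu>
  proof -
    have "mon_degree \<mu> \<le> Max (mon_degree ` ?K)" using that by simp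
    then show ?thesis using Pdeg P0 unfolding mpoly_degree_def card_Eset by simp
  qed
  obtain \<mu>0 where mu0: "\<mu>0 \<in> ?K" "card (Eset \<mu>0) = m"
  proof -
    have "Max (mon_degree ` ?K) \<in> mon_degree ` ?K" using Kne by simp
    then obtain \<mu>0 where "\<mu>0 \<in> ?K" "mon_degree \<mu>0 = Max (mon_degree ` ?K)" by auto
    then show ?thesis using that Pdeg P0 unfolding mpoly_degree_def card_Eset by simp
  qed
  let ?E0 = "Eset \<mu>0"
  obtain \<beta> where \<beta>: "bij_betw \<beta> ?E0 {..<m}"
    using ex_bij_betw_finite_nat[OF finite_Eset, of \<mu>0] mu0(2) by (auto simp: atLeast0LessThan)
  have \<beta>inj: "inj_on \<beta> ?E0" and \<beta>im: "\<beta> ` ?E0 = {..<m}" using \<beta> unfolding bij_betw_def by auto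
  define \<phi> where "\<phi> j c = fst (inv_into ?E0 \<beta> c) ! j" for j c
  define H where "H \<mu> = Hset d m \<phi> \<mu>" for \<mu>
  define M where "M = (\<Union>\<mu>\<in>?K. mon (Eset \<mu>) ` H \<mu>)"
  define gc where "gc \<nu> = (\<Sum>\<mu>\<in>?K. Poly_Mapping.lookup P \<mu> * of_nat (card {h\<in>H \<mu>. mon (Eset \<mu>) h = \<nu>}))" for \<nu>
  have finM: "finite M" unfolding M_def H_def using finK by (auto intro: finite_Hset)
  have injH: "inj_on h (Eset \<mu>)" if "\<mu> \<in> ?K" "h \<in> H \<mu>" for \<mu> h
    using Hset_inj'[OF degle[OF that(1)] _ d] that(2) unfolding H_def by blast
  have vars: "\<forall>\<nu>\<in>M. Poly_Mapping.keys \<nu> \<subseteq> {i. valid_idx d (\<lambda>_. m) i}"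
  proof
    fix \<nu> assume "\<nu> \<in> M"
    then obtain \<mu> h where mh: "\<mu> \<in> ?K" "h \<in> H \<mu>" "\<nu> = mon (Eset \<mu>) h" unfolding M_def by auto
    show "Poly_Mapping.keys \<nu> \<subseteq> {i. valid_idx d (\<lambda>_. m) i}"
    proof
      fix u assume "u \<in> Poly_Mapping.keys \<nu>"
      then obtain e where e: "e \<in> Eset \<mu>" "u = h e" using mh(3) by (auto simp: keys_mon[OF finite_Eset])
      have "h e \<in> PL d m \<phi> (fst e)" using mh(2) e(1) unfolding H_def Hset_def by (auto simp: PiE_iff)
      then show "u \<in> {i. valid_idx d (\<lambda>_. m) i}" using e(2) unfolding PL_def valid_idx_def by auto
    qed
  qed
  have wts: "\<forall>\<nu>\<in>M. \<forall>k<d. \<forall>a<m. (\<Sum>v\<in>{v\<in>Poly_Mapping.keys \<nu>. v ! k = a}. Poly_Mapping.lookup \<nu> v) = 1"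
  proof (intro ballI allI impI)
    fix \<nu> k a assume "\<nu> \<in> M" "k < d" "a < m"
    then obtain \<mu> h where mh: "\<mu> \<in> ?K" "h \<in> H \<mu>" "\<nu> = mon (Eset \<mu>) h" unfolding M_def by auto
    show "(\<Sum>v\<in>{v\<in>Poly_Mapping.keys \<nu>. v ! k = a}. Poly_Mapping.lookup \<nu> v) = 1"
      unfolding mh(3) by (rule Hset_weight[OF degle[OF mh(1)] mh(2)[unfolded H_def] \<open>k < d\<close> \<open>a < m\<close>])
  qed
  have van: "(\<Sum>\<nu>\<in>M. gc \<nu> * monval \<nu> T) = 0" if T: "prank_le d (\<lambda>_. m) r T" for T
  proof -
    let ?AS = "PiE {..<d} (\<lambda>_. Pow {..<m})"
    let ?sg = "\<lambda>A. (-1::complex) ^ (\<Sum>j<d. card (A j))"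
    have grp: "(\<Sum>\<nu>\<in>M. of_nat (card {h\<in>H \<mu>. mon (Eset \<mu>) h = \<nu>}) * monval \<nu> T)
             = (\<Sum>h\<in>H \<mu>. \<Prod>e\<in>Eset \<mu>. T (h e))" if mu: "\<mu> \<in> ?K" for \<mu>
    proof -
      have "(\<Sum>\<nu>\<in>M. of_nat (card {h\<in>H \<mu>. mon (Eset \<mu>) h = \<nu>}) * monval \<nu> T)
          = (\<Sum>\<nu>\<in>M. \<Sum>h\<in>{h\<in>H \<mu>. mon (Eset \<mu>) h = \<nu>}. monval (mon (Eset \<mu>) h) T)"
        by (rule sum.cong[OF refl]) simp
      also have "\<dots> = (\<Sum>h\<in>H \<mu>. monval (mon (Eset \<mu>) h) T)"
        by (rule sum.group) (use finM mu in \<open>auto simp: H_def finite_Hset M_def\<close>)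
      also have "\<dots> = (\<Sum>h\<in>H \<mu>. \<Prod>e\<in>Eset \<mu>. T (h e))"
        by (rule sum.cong[OF refl]) (rule monval_mon[OF finite_Eset injH[OF mu]])
      finally show ?thesis .
    qed
    have "(\<Sum>\<nu>\<in>M. gc \<nu> * monval \<nu> T)
        = (\<Sum>\<mu>\<in>?K. Poly_Mapping.lookup P \<mu> * (\<Sum>\<nu>\<in>M. of_nat (card {h\<in>H \<mu>. mon (Eset \<mu>) h = \<nu>}) * monval \<nu> T))"
      unfolding gc_def sum_distrib_right sum_distrib_left
      by (subst sum.swap) (simp add: mult.assoc)
    also have "\<dots> = (\<Sum>\<mu>\<in>?K. Poly_Mapping.lookup P \<mu> * (\<Sum>h\<in>H \<mu>. \<Prod>e\<in>Eset \<mu>. T (h e)))"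
      by (rule sum.cong[OF refl]) (simp add: grp)
    also have "\<dots> = (\<Sum>\<mu>\<in>?K. Poly_Mapping.lookup P \<mu> * (\<Sum>A\<in>?AS. ?sg A * monval \<mu> (TA d m \<phi> A T)))"
      unfolding H_def expansion ..
    also have "\<dots> = (\<Sum>A\<in>?AS. ?sg A * mpoly_eval P (TA d m \<phi> A T))"
      unfolding mpoly_eval_def monval_def sum_distrib_left
      by (subst sum.swap) (simp add: mult.assoc mult.left_commute)
    also have "\<dots> = 0"
    proof (rule sum.neutral, rule ballI)
      fix A assume "A \<in> ?AS"
      have "prank_le d n r (TA d m \<phi> A T)" by (rule TA_prank[OF T])
      then show "?sg A * mpoly_eval P (TA d m \<phi> A T) = 0" using Pvan by simp
    qed
    finally show ?thesis .
  qed
  define h0 where "h0 = (\<lambda>e\<in>?E0. replicate d (\<beta> e))"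
  have \<phi>\<beta>: "\<phi> j (\<beta> e) = fst e ! j" if "e \<in> ?E0" for j e
    unfolding \<phi>_def using inv_into_f_f[OF \<beta>inj that] by simp
  have h0H: "h0 \<in> H \<mu>0"
    unfolding H_def Hset_def
  proof (intro CollectI conjI allI impI)
    show "h0 \<in> PiE ?E0 (\<lambda>e. PL d m \<phi> (fst e))"
      unfolding h0_def PL_def restrict_PiE_iff using \<beta>im \<phi>\<beta> by auto
    fix j assume j: "j < d"
    have "(\<lambda>e. h0 e ! j) ` ?E0 = \<beta> ` ?E0" unfolding h0_def using j by (intro image_cong) auto
    then show "(\<lambda>e. h0 e ! j) ` ?E0 = {..<m}" using \<beta>im by simp
  qed
  define \<nu>0 where "\<nu>0 = mon ?E0 h0"
  have nu0M: "\<nu>0 \<in> M" unfolding M_def \<nu>0_def using mu0(1) h0H by auto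
  define \<Phi> where "\<Phi> u = map (\<lambda>j. \<phi> j (u ! j)) [0..<d]" for u
  have cnt: "Poly_Mapping.lookup \<mu> v = card {u \<in> h ` Eset \<mu>. \<Phi> u = v}" if mh: "\<mu> \<in> ?K" "h \<in> H \<mu>" for \<mu> h v
  proof -
    have fe: "\<Phi> (h e) = fst e" if e: "e \<in> Eset \<mu>" for e
    proof -
      have "fst e \<in> poly_vars P" unfolding poly_vars_def using e mh(1) unfolding Eset_def by auto
      then have len: "length (fst e) = d" using Pv unfolding valid_idx_def by auto
      have "h e \<in> PL d m \<phi> (fst e)" using mh(2) e unfolding H_def Hset_def by (auto simp: PiE_iff)
      then have "\<forall>j<d. \<phi> j (h e ! j) = fst e ! j" unfolding PL_def by auto
      then show ?thesis unfolding \<Phi>_def using len by (intro nth_equalityI) auto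
    qed
    have "Poly_Mapping.lookup \<mu> v = card {e\<in>Eset \<mu>. fst e = v}" by (rule lookup_card)
    also have "{e\<in>Eset \<mu>. fst e = v} = {e\<in>Eset \<mu>. \<Phi> (h e) = v}" using fe by auto
    also have "card \<dots> = card (h ` {e\<in>Eset \<mu>. \<Phi> (h e) = v})"
      by (rule card_image[symmetric]) (rule inj_on_subset[OF injH[OF mh]], auto)
    also have "h ` {e\<in>Eset \<mu>. \<Phi> (h e) = v} = {u \<in> h ` Eset \<mu>. \<Phi> u = v}" by auto
    finally show ?thesis .
  qed
  have only0: "\<mu> = \<mu>0" if mh: "\<mu> \<in> ?K" "h \<in> H \<mu>" "mon (Eset \<mu>) h = \<nu>0" for \<mu> h
  proof -
    have "h ` Eset \<mu> = h0 ` ?E0"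
      using arg_cong[OF mh(3), of Poly_Mapping.keys] unfolding \<nu>0_def keys_mon[OF finite_Eset] .
    then have "Poly_Mapping.lookup \<mu> v = Poly_Mapping.lookup \<mu>0 v" for v
      using cnt[OF mh(1,2), of v] cnt[OF mu0(1) h0H, of v] by simp
    then show ?thesis by (rule poly_mapping_eqI)
  qed
  have "gc \<nu>0 = (\<Sum>\<mu>\<in>?K. if \<mu> = \<mu>0 then Poly_Mapping.lookup P \<mu>0 * of_nat (card {h\<in>H \<mu>0. mon ?E0 h = \<nu>0}) else 0)"
    unfolding gc_def
  proof (rule sum.cong[OF refl])
    fix \<mu> assume mu: "\<mu> \<in> ?K"
    show "Poly_Mapping.lookup P \<mu> * of_nat (card {h\<in>H \<mu>. mon (Eset \<mu>) h = \<nu>0}) =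
          (if \<mu> = \<mu>0 then Poly_Mapping.lookup P \<mu>0 * of_nat (card {h\<in>H \<mu>0. mon ?E0 h = \<nu>0}) else 0)"
    proof (cases "\<mu> = \<mu>0")
      case False
      have e: "{h\<in>H \<mu>. mon (Eset \<mu>) h = \<nu>0} = {}" using only0[OF mu] False by blast
      show ?thesis unfolding e using False by simp
    qed simp
  qed
  also have "\<dots> = Poly_Mapping.lookup P \<mu>0 * of_nat (card {h\<in>H \<mu>0. mon ?E0 h = \<nu>0})"
    using mu0(1) finK by simp
  finally have gc0: "gc \<nu>0 = Poly_Mapping.lookup P \<mu>0 * of_nat (card {h\<in>H \<mu>0. mon ?E0 h = \<nu>0})" .
  have "card {h\<in>H \<mu>0. mon ?E0 h = \<nu>0} > 0"
  proof -
    have "finite {h\<in>H \<mu>0. mon ?E0 h = \<nu>0}" unfolding H_def by (simp add: finite_Hset)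
    moreover have "h0 \<in> {h\<in>H \<mu>0. mon ?E0 h = \<nu>0}" using h0H unfolding \<nu>0_def by simp
    ultimately show ?thesis by (auto simp: card_gt_0_iff)
  qed
  moreover have "Poly_Mapping.lookup P \<mu>0 \<noteq> 0" using mu0(1) by (simp add: in_keys_iff)
  ultimately have "gc \<nu>0 \<noteq> 0" unfolding gc0 by simp
  then show ?thesis using finM nu0M vars wts van by blast
qed


theorem mainTheorem4:
  fixes d r m :: nat
  assumes "d \<ge> 2" and "r \<ge> 1" and "m \<ge> 1"
    and "\<exists>n :: nat \<Rightarrow> nat. (\<forall>j<d. n j > 0) \<and>
           (\<exists>P :: complex mpoly. P \<noteq> 0 \<and> poly_vars P \<subseteq> {i. valid_idx d n i} \<and>
              mpoly_degree P = m \<and> (\<forall>T. prank_le d n r T \<longrightarrow> mpoly_eval P T = 0))"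
  shows "\<exists>f :: int mpoly. f \<noteq> 0 \<and> poly_vars f \<subseteq> {i. valid_idx d (\<lambda>_. m) i} \<and>
           Gcd (Poly_Mapping.lookup f ` Poly_Mapping.keys f) = 1 \<and> has_weight_ones d m f \<and>
           (\<forall>T. prank_le d (\<lambda>_. m) r T \<longrightarrow> mpoly_eval (Poly_Mapping.map of_int f :: complex mpoly) T = 0)"
proof -
  obtain n P where P: "(P :: complex mpoly) \<noteq> 0" "poly_vars P \<subseteq> {i. valid_idx d n i}"
    "mpoly_degree P = m" "\<forall>T. prank_le d n r T \<longrightarrow> mpoly_eval P T = 0"
    using assms(4) by blast
  have d1: "d \<ge> 1" using assms(1) by simp
  obtain M gc \<nu>0 where R: "finite M" "\<nu>0 \<in> M" "gc \<nu>0 \<noteq> (0::complex)"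
     "\<forall>\<nu>\<in>M. Poly_Mapping.keys \<nu> \<subseteq> {i. valid_idx d (\<lambda>_. m) i}"
     "\<forall>\<nu>\<in>M. \<forall>k<d. \<forall>a<m. (\<Sum>v\<in>{v\<in>Poly_Mapping.keys \<nu>. v ! k = a}. Poly_Mapping.lookup \<nu> v) = 1"
     "\<forall>T. prank_le d (\<lambda>_. m) r T \<longrightarrow> (\<Sum>\<nu>\<in>M. gc \<nu> * monval \<nu> T) = 0"
    using reduction[OF d1 assms(3) P] by blast
  show ?thesis
    by (rule finish[where M=M and gc=gc and ?\<nu>0.0=\<nu>0 and m=m and d=d and r=r, OF R(1,2,3) assms(3)])
      (use R(4,5,6) in blast)+
qed

end
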